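(* Let $L>0$, $T>0$, $K,M$ positive integers, $\Delta x=L/K$, $\Delta t=T/M$. Let $(E,N,V)$ be a sufficiently smooth solution of the periodic Zakharov system $\mathrm{i}E_t+E_{xx}=NE$, $N_t=V_{xx}$, $V_t=N+|E|^2$, $V(0,0)=0$ ($L$-periodic in $x$, $\int_0^LN_t(0,x)\,\mathrm{d}x=0$), and let $(E^{(m)},N^{(m)},V^{(m)})$, $m=0,\dots,M$, solve the DVDM scheme $$\begin{cases}\mathrm{i}\,\delta_t^+E^{(m)}_k=-\delta_x^{\langle 2\rangle}\mu_t^+E^{(m)}_k+(\mu_t^+N^{(m)}_k)(\mu_t^+E^{(m)}_k),\\ \delta_t^+N^{(m)}_k=\delta_x^{\langle 2\rangle}\mu_t^+V^{(m)}_k,\\ \delta_t^+V^{(m)}_k=\mu_t^+N^{(m)}_k+\mu_t^+|E^{(m)}_k|^2,\end{cases}$$ with $E^{(0)}_k=E(0,k\Delta x)$, $N^{(0)}_k=N(0,k\Delta x)$, $|V^{(0)}_k-V(0,k\Delta x)|\le C_V(\Delta x)^2$ ($C_V$ independent of $\Delta x$), and let $\Delta x$ be sufficiently small. Define $A^{(m)}:=\langle e_N^{(m)}+\tilde N^{(m)},|e_E^{(m)}|^2\rangle+2\,\mathrm{Re}\langle e_E^{(m)},\tilde E^{(m)}e_N^{(m)}\rangle$. Then for $m=0,\dots,M$, $$|A^{(m)}|\le\tfrac32\|e_N^{(m)}\|^2+C_4\|e_E^{(m)}\|^2$$ for a constant $C_4>0$ not depending on $\Delta t$ and $\Delta x$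.
   Context: Grid functions are $K$-periodic in $k$. Operators: $\delta_x^{\langle 2\rangle}u_k=(u_{k+1}-2u_k+u_{k-1})/(\Delta x)^2$, $\delta_t^+u^{(m)}=(u^{(m+1)}-u^{(m)})/\Delta t$, $\mu_t^+u^{(m)}=(u^{(m+1)}+u^{(m)})/2$. Inner product $\langle v,w\rangle=\sum_{k=1}^Kv_k\bar w_k\Delta x$, norm $\|v\|=\langle v,v\rangle^{1/2}$. Products and $|\cdot|^2$ of grid functions are componentwise. $\tilde E^{(m)}_k=E(m\Delta t,k\Delta x)$, $\tilde N^{(m)}_k=N(m\Delta t,k\Delta x)$; $e_E^{(m)}=E^{(m)}-\tilde E^{(m)}$, $e_N^{(m)}=N^{(m)}-\tilde N^{(m)}$. *)

theory Defs
  imports "HOL-Analysis.Analysis"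
begin

primrec Ck :: "nat \<Rightarrow> (real \<times> real \<Rightarrow> 'b::real_normed_vector) \<Rightarrow> bool" where
  "Ck 0 f = continuous_on UNIV f"
| "Ck (Suc k) f = (\<exists>D. (\<forall>z. (f has_derivative D z) (at z))
                      \<and> Ck k (\<lambda>z. D z (1, 0)) \<and> Ck k (\<lambda>z. D z (0, 1)))"

definition smooth2 :: "(real \<Rightarrow> real \<Rightarrow> 'b::real_normed_vector) \<Rightarrow> bool" where
  "smooth2 f = (\<forall>k. Ck k (\<lambda>(t, x). f t x))"

definition pdt :: "(real \<Rightarrow> real \<Rightarrow> 'b::real_normed_vector) \<Rightarrow> real \<Rightarrow> real \<Rightarrow> 'b" where
  "pdt f t x = vector_derivative (\<lambda>s. f s x) (at t)"

definition pdx :: "(real \<Rightarrow> real \<Rightarrow> 'b::real_normed_vector) \<Rightarrow> real \<Rightarrow> real \<Rightarrow> 'b" where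
  "pdx f t x = vector_derivative (\<lambda>y. f t y) (at x)"

definition d2x :: "real \<Rightarrow> (int \<Rightarrow> 'a::real_vector) \<Rightarrow> int \<Rightarrow> 'a" where
  "d2x h u k = (1 / h\<^sup>2) *\<^sub>R (u (k + 1) - 2 *\<^sub>R u k + u (k - 1))"

definition gip :: "real \<Rightarrow> nat \<Rightarrow> (int \<Rightarrow> complex) \<Rightarrow> (int \<Rightarrow> complex) \<Rightarrow> complex" where
  "gip h K v w = (\<Sum>k = 1..int K. v k * cnj (w k)) * complex_of_real h"

definition gnorm :: "real \<Rightarrow> nat \<Rightarrow> (int \<Rightarrow> complex) \<Rightarrow> real" where
  "gnorm h K v = sqrt (Re (gip h K v v))"

definition periodic_grid :: "nat \<Rightarrow> (int \<Rightarrow> 'a) \<Rightarrow> bool" where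
  "periodic_grid K u = (\<forall>k. u (k + int K) = u k)"

definition dvdm_step :: "real \<Rightarrow> real \<Rightarrow> (int \<Rightarrow> complex) \<Rightarrow> (int \<Rightarrow> real) \<Rightarrow> (int \<Rightarrow> real)
    \<Rightarrow> (int \<Rightarrow> complex) \<Rightarrow> (int \<Rightarrow> real) \<Rightarrow> (int \<Rightarrow> real) \<Rightarrow> bool" where
  "dvdm_step h dt E0 N0 V0 E1 N1 V1 =
    (\<forall>k.
      \<i> * ((E1 k - E0 k) / complex_of_real dt)
        = - d2x h (\<lambda>j. (E1 j + E0 j) / 2) k
          + complex_of_real ((N1 k + N0 k) / 2) * ((E1 k + E0 k) / 2)
    \<and> (N1 k - N0 k) / dt = d2x h (\<lambda>j. (V1 j + V0 j) / 2) k
    \<and> (V1 k - V0 k) / dt = (N1 k + N0 k) / 2 + ((cmod (E1 k))\<^sup>2 + (cmod (E0 k))\<^sup>2) / 2)"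

definition Aq :: "real \<Rightarrow> nat \<Rightarrow> (int \<Rightarrow> complex) \<Rightarrow> (int \<Rightarrow> real) \<Rightarrow> (int \<Rightarrow> complex) \<Rightarrow> (int \<Rightarrow> real) \<Rightarrow> complex" where
  "Aq h K eE eN tE tN =
     gip h K (\<lambda>k. complex_of_real (eN k + tN k)) (\<lambda>k. complex_of_real ((cmod (eE k))\<^sup>2))
     + complex_of_real (2 * Re (gip h K eE (\<lambda>k. tE k * complex_of_real (eN k))))"

end

theory Submission imports Defs begin

lemma telesc_int:
  fixes f :: "int \<Rightarrow> 'a::ab_group_add"
  shows "(\<Sum>k=1..int n. f (k-1) - f k) = f 0 - f (int n)"
proof (induction n)
  case 0 then show ?case by simp
next
  case (Suc n)
  have "{1..int (Suc n)} = insert (int n + 1) {1..int n}" by auto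
  then show ?case using Suc by (simp add: add.commute)
qed

lemma shift_sum:
  fixes f :: "int \<Rightarrow> 'a::ab_group_add"
  assumes "f 0 = f (int K)"
  shows "(\<Sum>k=1..int K. f (k-1)) = (\<Sum>k=1..int K. f k)"
  using telesc_int[of f K] assms by (simp add: sum_subtractf)

definition Dg :: "real \<Rightarrow> (int \<Rightarrow> 'a::real_vector) \<Rightarrow> int \<Rightarrow> 'a" where
  "Dg h u k = (1/h) *\<^sub>R (u (k+1) - u k)"

lemma d2x_Dg: "h \<noteq> 0 \<Longrightarrow> d2x h u k = (1/h) *\<^sub>R (Dg h u k - Dg h u (k-1))"
  unfolding d2x_def Dg_def
  by (simp add: power2_eq_square scaleR_diff_right algebra_simps flip: scaleR_add_left)

lemma sbp:
  fixes u w :: "int \<Rightarrow> 'a::real_inner"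
  assumes "periodic_grid K u" "periodic_grid K w" "h \<noteq> 0"
  shows "(\<Sum>k=1..int K. inner (d2x h u k) (w k)) = - (\<Sum>k=1..int K. inner (Dg h u k) (Dg h w k))"
proof -
  have pu: "u (k + int K) = u k" for k using assms(1) unfolding periodic_grid_def by blast
  have pw: "w (k + int K) = w k" for k using assms(2) unfolding periodic_grid_def by blast
  let ?f = "\<lambda>k. inner (Dg h u k) (w (k+1))"
  have f0: "?f 0 = ?f (int K)"
    using pu[of 0] pu[of 1] pw[of 1] by (simp add: Dg_def add.commute)
  have sh: "(\<Sum>k=1..int K. ?f (k-1)) = (\<Sum>k=1..int K. ?f k)"
    by (rule shift_sum[OF f0])
  have "(\<Sum>k=1..int K. inner (d2x h u k) (w k))
      = (1/h) * ((\<Sum>k=1..int K. inner (Dg h u k) (w k)) - (\<Sum>k=1..int K. ?f (k-1)))"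
    using assms(3) by (simp add: d2x_Dg inner_diff_left sum_subtractf sum_distrib_left
        flip: sum_divide_distrib)
  also have "\<dots> = (1/h) * ((\<Sum>k=1..int K. inner (Dg h u k) (w k)) - (\<Sum>k=1..int K. ?f k))"
    using sh by simp
  also have "\<dots> = (1/h) * (\<Sum>k=1..int K. inner (Dg h u k) (w k - w (k+1)))"
    by (simp add: inner_diff_right sum_subtractf)
  also have "\<dots> = (1/h) * (\<Sum>k=1..int K. - h * inner (Dg h u k) (Dg h w k))"
  proof -
    have "inner (Dg h u k) (w k - w (k+1)) = - h * inner (Dg h u k) (Dg h w k)" for k
      using assms(3) unfolding Dg_def[of h w] by (simp add: inner_diff_right algebra_simps)
    then show ?thesis by simp
  qed
  also have "\<dots> = - (\<Sum>k=1..int K. inner (Dg h u k) (Dg h w k))"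
    using assms(3) by (simp add: sum_negf sum_distrib_left[symmetric])
  finally show ?thesis .
qed

lemma lip_x:
  fixes F :: "real \<Rightarrow> real \<Rightarrow> 'b::real_inner"
  assumes "smooth2 F"
  shows "\<exists>B\<ge>0. \<forall>x\<in>{a..b}. \<forall>y\<in>{a..b}. x \<le> y \<longrightarrow> norm (F t0 y - F t0 x) \<le> B * (y - x)"
proof -
  have "Ck 1 (\<lambda>(t, x). F t x)" using assms unfolding smooth2_def by blast
  then obtain D where hD: "\<And>z. ((\<lambda>(t, x). F t x) has_derivative D z) (at z)"
      and cD: "continuous_on UNIV (\<lambda>z. D z (0, 1))"
    by (auto simp: numeral_eq_Suc)
  have c2: "continuous_on {a..b} (\<lambda>s. D (t0, s) (0, 1))"
  proof -
    have "continuous_on {a..b} (\<lambda>s. (t0, s))" by (intro continuous_intros)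
    then show ?thesis using continuous_on_compose2[OF cD, of "{a..b}" "\<lambda>s. (t0, s)"] by simp
  qed
  have "compact ((\<lambda>s. D (t0, s) (0, 1)) ` {a..b})"
    by (rule compact_continuous_image[OF c2]) (rule compact_Icc)
  then have "bounded ((\<lambda>s. D (t0, s) (0, 1)) ` {a..b})" by (rule compact_imp_bounded)
  then obtain B0 where "\<forall>v\<in>(\<lambda>s. D (t0, s) (0, 1)) ` {a..b}. norm v \<le> B0"
    unfolding bounded_iff by blast
  then have B0: "\<And>s. s \<in> {a..b} \<Longrightarrow> norm (D (t0, s) (0, 1)) \<le> B0" by blast
  define B where "B = max B0 0"
  have dd: "((\<lambda>s. F t0 s) has_derivative (\<lambda>u. D (t0, s) (0, u))) (at s)" for s
  proof -
    have p: "((\<lambda>s. (t0, s)) has_derivative (\<lambda>u. (0, u))) (at s)"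
      by (rule has_derivative_Pair[OF has_derivative_const has_derivative_ident, simplified])
    have "((\<lambda>(t, x). F t x) \<circ> (\<lambda>s. (t0, s)) has_derivative D (t0, s) \<circ> (\<lambda>u. (0, u))) (at s)"
      by (rule diff_chain_at[OF p hD])
    then show ?thesis by (simp add: o_def)
  qed
  have lin: "D (t0, s) (0, u) = u *\<^sub>R D (t0, s) (0, 1)" for s u
  proof -
    have "linear (D (t0, s))" using hD has_derivative_linear by blast
    then have "D (t0, s) (u *\<^sub>R (0, 1)) = u *\<^sub>R D (t0, s) (0, 1)" by (rule linear_scale)
    then show ?thesis by simp
  qed
  have "norm (F t0 y - F t0 x) \<le> B * (y - x)" if xy: "x \<in> {a..b}" "y \<in> {a..b}" "x \<le> y" for x y
  proof (cases "x = y")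
    case True then show ?thesis by simp
  next
    case False
    then have "x < y" using xy by simp
    have cont: "continuous_on {x..y} (\<lambda>s. F t0 s)"
      by (rule continuous_at_imp_continuous_on) (meson dd has_derivative_continuous)
    obtain s where s: "s \<in> {x<..<y}" "norm (F t0 y - F t0 x) \<le> norm (D (t0, s) (0, y - x))"
      using mvt_general[OF \<open>x < y\<close> cont dd] by blast
    have "s \<in> {a..b}" using s(1) xy(1,2) by simp
    then have "norm (D (t0, s) (0, y - x)) \<le> B * (y - x)"
    proof -
      have "norm (D (t0, s) (0, y - x)) = (y - x) * norm (D (t0, s) (0, 1))"
        using \<open>x < y\<close> by (subst lin) simp
      also have "\<dots> \<le> (y - x) * B"
        using B0[OF \<open>s \<in> {a..b}\<close>] \<open>x < y\<close> unfolding B_def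
        by (intro mult_left_mono) auto
      finally show ?thesis by (simp add: mult.commute)
    qed
    then show ?thesis using s by linarith
  qed
  moreover have "B \<ge> 0" by (simp add: B_def)
  ultimately show ?thesis by blast
qed


lemma cmsq: "cmod z * cmod z = Re z * Re z + Im z * Im z"
  by (simp add: cmod_def power2_eq_square)

lemma ip1: "inner (\<i> * ((b - a) / complex_of_real dt)) (\<i> * ((b + a) / 2)) = ((cmod b)\<^sup>2 - (cmod a)\<^sup>2) / (2 * dt)"
  by (simp add: inner_complex_def field_simps power2_eq_square cmsq add_divide_distrib[symmetric] diff_divide_distrib[symmetric])

lemma ip2: "inner (\<i> * (w / complex_of_real dt)) w = 0"
  by (simp add: inner_complex_def field_simps)

lemma ip3: "inner (complex_of_real r * z) (\<i> * z) = 0"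
  by (simp add: inner_complex_def field_simps)

lemma ip4: "inner z (\<i> * z) = 0"
  by (simp add: inner_complex_def field_simps)

lemma ip5: "inner ((p + q) / 2) (p - q) = ((cmod p)\<^sup>2 - (cmod q)\<^sup>2) / 2"
  by (simp add: inner_complex_def field_simps power2_eq_square cmsq)

lemma ip6: "inner (complex_of_real r * ((b + a) / 2)) (b - a) = r * (((cmod b)\<^sup>2 - (cmod a)\<^sup>2) / 2)"
  by (simp add: inner_complex_def field_simps power2_eq_square cmsq)

lemma Dg_add2: "h \<noteq> 0 \<Longrightarrow> Dg h (\<lambda>j. (b j + a j) / 2) k = (Dg h b k + Dg h a k) / (2::complex)"
  by (simp add: Dg_def scaleR_conv_of_real field_simps)

lemma Dg_add2r: "h \<noteq> 0 \<Longrightarrow> Dg h (\<lambda>j. (b j + a j) / 2) k = (Dg h b k + Dg h a k) / (2::real)"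
  by (simp add: Dg_def field_simps)

lemma Dg_diff: "Dg h (\<lambda>j. b j - a j) k = Dg h b k - Dg h a k"
  by (simp add: Dg_def algebra_simps)

lemma Dg_i: "Dg h (\<lambda>j. \<i> * b j) k = \<i> * Dg h b k"
  by (simp add: Dg_def scaleR_conv_of_real algebra_simps)


lemma per2: "periodic_grid K u \<Longrightarrow> periodic_grid K v \<Longrightarrow> periodic_grid K (\<lambda>j. g (u j) (v j))"
  unfolding periodic_grid_def by simp

lemma per1: "periodic_grid K u \<Longrightarrow> periodic_grid K (\<lambda>j. g (u j))"
  unfolding periodic_grid_def by simp

definition msum :: "nat \<Rightarrow> (int \<Rightarrow> complex) \<Rightarrow> real" where
  "msum K E = (\<Sum>k=1..int K. (cmod (E k))\<^sup>2)"

definition ener :: "real \<Rightarrow> nat \<Rightarrow> (int \<Rightarrow> complex) \<Rightarrow> (int \<Rightarrow> real) \<Rightarrow> (int \<Rightarrow> real) \<Rightarrow> real" where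
  "ener h K E N V = (\<Sum>k=1..int K. (cmod (Dg h E k))\<^sup>2) + (\<Sum>k=1..int K. N k * (cmod (E k))\<^sup>2)
     + (\<Sum>k=1..int K. (N k)\<^sup>2) / 2 + (\<Sum>k=1..int K. (Dg h V k)\<^sup>2) / 2"

lemma step_cons:
  assumes st: "dvdm_step h dt a N0 V0 b N1 V1" and h: "h > 0" and dt: "dt > 0"
    and pa: "periodic_grid K a" and pb: "periodic_grid K b"
    and pN0: "periodic_grid K N0" and pN1: "periodic_grid K N1"
    and pV0: "periodic_grid K V0" and pV1: "periodic_grid K V1"
  shows "msum K b = msum K a \<and> ener h K b N1 V1 = ener h K a N0 V0"
proof -
  define mE where "mE = (\<lambda>j. (b j + a j) / (2::complex))"
  define mN where "mN = (\<lambda>j. (N1 j + N0 j) / (2::real))"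
  define mV where "mV = (\<lambda>j. (V1 j + V0 j) / (2::real))"
  define mS where "mS = (\<lambda>j. ((cmod (b j))\<^sup>2 + (cmod (a j))\<^sup>2) / (2::real))"
  have e1: "\<And>k. \<i> * ((b k - a k) / complex_of_real dt) = - d2x h mE k + complex_of_real (mN k) * mE k"
    using st unfolding dvdm_step_def mE_def mN_def by blast
  have e2: "\<And>k. N1 k - N0 k = dt * d2x h mV k"
    using st dt unfolding dvdm_step_def mV_def by (simp add: field_simps)
  have e3: "\<And>k. V1 k - V0 k = dt * (mN k + mS k)"
    using st dt unfolding dvdm_step_def mN_def mS_def by (simp add: field_simps)
  have pmE: "periodic_grid K mE" unfolding mE_def by (rule per2[OF pb pa])
  have pmV: "periodic_grid K mV" unfolding mV_def by (rule per2[OF pV1 pV0])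
  have pimE: "periodic_grid K (\<lambda>j. \<i> * mE j)" by (rule per1[OF pmE])
  have pba: "periodic_grid K (\<lambda>j. b j - a j)" by (rule per2[OF pb pa])
  have pVV: "periodic_grid K (\<lambda>j. V1 j - V0 j)" by (rule per2[OF pV1 pV0])
  have hne: "h \<noteq> 0" using h by simp
  have "(\<Sum>k=1..int K. ((cmod (b k))\<^sup>2 - (cmod (a k))\<^sup>2) / (2 * dt))
      = (\<Sum>k=1..int K. inner (\<i> * ((b k - a k) / complex_of_real dt)) (\<i> * mE k))"
    unfolding mE_def by (simp only: ip1)
  also have "\<dots> = (\<Sum>k=1..int K. inner (- d2x h mE k + complex_of_real (mN k) * mE k) (\<i> * mE k))"
    by (simp only: e1)
  also have "\<dots> = - (\<Sum>k=1..int K. inner (d2x h mE k) (\<i> * mE k))"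
    by (simp only: inner_add_left inner_minus_left sum.distrib sum_negf ip3 sum.neutral_const add_0_right)
  also have "\<dots> = (\<Sum>k=1..int K. inner (Dg h mE k) (Dg h (\<lambda>j. \<i> * mE j) k))"
    using sbp[OF pmE pimE hne] by simp
  also have "\<dots> = 0" by (simp add: Dg_i ip4)
  finally have "(\<Sum>k=1..int K. ((cmod (b k))\<^sup>2 - (cmod (a k))\<^sup>2)) / (2 * dt) = 0"
    by (simp add: sum_divide_distrib)
  then have mass: "msum K b = msum K a" using dt unfolding msum_def by (simp add: sum_subtractf)
  define X where "X = (\<Sum>k=1..int K. (cmod (Dg h b k))\<^sup>2 - (cmod (Dg h a k))\<^sup>2)"
  define Y where "Y = (\<Sum>k=1..int K. mN k * ((cmod (b k))\<^sup>2 - (cmod (a k))\<^sup>2))"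
  have "0 = (\<Sum>k=1..int K. inner (\<i> * ((b k - a k) / complex_of_real dt)) (b k - a k))"
    by (simp only: ip2 sum.neutral_const)
  also have "\<dots> = (\<Sum>k=1..int K. inner (- d2x h mE k + complex_of_real (mN k) * mE k) (b k - a k))"
    by (simp only: e1)
  also have "\<dots> = - (\<Sum>k=1..int K. inner (d2x h mE k) (b k - a k)) + Y / 2"
    unfolding Y_def mE_def
    by (simp only: inner_add_left inner_minus_left sum.distrib sum_negf ip6 sum_divide_distrib) simp
  also have "\<dots> = (\<Sum>k=1..int K. inner (Dg h mE k) (Dg h (\<lambda>j. b j - a j) k)) + Y / 2"
    using sbp[OF pmE pba hne] by simp
  also have "\<dots> = X / 2 + Y / 2"
    unfolding X_def mE_def using hne by (simp add: Dg_add2 Dg_diff ip5 sum_divide_distrib)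
  finally have XY: "X + Y = 0" by simp
  define Z where "Z = (\<Sum>k=1..int K. (N1 k - N0 k) * mS k)"
  define W1 where "W1 = (\<Sum>k=1..int K. (N1 k)\<^sup>2 - (N0 k)\<^sup>2)"
  define W2 where "W2 = (\<Sum>k=1..int K. (Dg h V1 k)\<^sup>2 - (Dg h V0 k)\<^sup>2)"
  have W1: "W1 = 2 * dt * (\<Sum>k=1..int K. mN k * d2x h mV k)"
  proof -
    have "(N1 k)\<^sup>2 - (N0 k)\<^sup>2 = 2 * dt * (mN k * d2x h mV k)" for k
    proof -
      have "(N1 k)\<^sup>2 - (N0 k)\<^sup>2 = 2 * mN k * (N1 k - N0 k)"
        unfolding mN_def by (simp add: power2_eq_square algebra_simps)
      then show ?thesis using e2[of k] by simp
    qed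
    then show ?thesis unfolding W1_def by (simp add: sum_distrib_left)
  qed
  have W2: "W2 = - 2 * dt * (\<Sum>k=1..int K. d2x h mV k * mN k + d2x h mV k * mS k)"
  proof -
    have "(Dg h V1 k)\<^sup>2 - (Dg h V0 k)\<^sup>2 = 2 * (Dg h mV k * Dg h (\<lambda>j. V1 j - V0 j) k)" for k
      unfolding mV_def using hne by (simp add: Dg_add2r Dg_diff power2_eq_square algebra_simps)
    then have "W2 = 2 * (\<Sum>k=1..int K. Dg h mV k * Dg h (\<lambda>j. V1 j - V0 j) k)"
      unfolding W2_def by (simp add: sum_distrib_left)
    also have "\<dots> = - 2 * (\<Sum>k=1..int K. d2x h mV k * (V1 k - V0 k))"
      using sbp[OF pmV pVV hne] by simp
    also have "\<dots> = - 2 * dt * (\<Sum>k=1..int K. d2x h mV k * mN k + d2x h mV k * mS k)"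
      by (simp add: e3 sum_distrib_left algebra_simps)
    finally show ?thesis .
  qed
  have Zd: "Z = dt * (\<Sum>k=1..int K. d2x h mV k * mS k)"
    unfolding Z_def by (simp add: e2 sum_distrib_left algebra_simps)
  have NE: "(\<Sum>k=1..int K. N1 k * (cmod (b k))\<^sup>2) - (\<Sum>k=1..int K. N0 k * (cmod (a k))\<^sup>2) = Z + Y"
  proof -
    have "N1 k * (cmod (b k))\<^sup>2 - N0 k * (cmod (a k))\<^sup>2
        = (N1 k - N0 k) * mS k + mN k * ((cmod (b k))\<^sup>2 - (cmod (a k))\<^sup>2)" for k
      unfolding mS_def mN_def by (simp add: field_simps)
    then show ?thesis unfolding Z_def Y_def by (simp add: sum_subtractf[symmetric] sum.distrib)
  qed
  have "ener h K b N1 V1 - ener h K a N0 V0 = X + (Z + Y) + W1 / 2 + W2 / 2"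
  proof -
    have "X = (\<Sum>k=1..int K. (cmod (Dg h b k))\<^sup>2) - (\<Sum>k=1..int K. (cmod (Dg h a k))\<^sup>2)"
      unfolding X_def by (rule sum_subtractf)
    moreover have "W1 = (\<Sum>k=1..int K. (N1 k)\<^sup>2) - (\<Sum>k=1..int K. (N0 k)\<^sup>2)"
      unfolding W1_def by (rule sum_subtractf)
    moreover have "W2 = (\<Sum>k=1..int K. (Dg h V1 k)\<^sup>2) - (\<Sum>k=1..int K. (Dg h V0 k)\<^sup>2)"
      unfolding W2_def by (rule sum_subtractf)
    ultimately show ?thesis using NE unfolding ener_def by linarith
  qed
  also have "\<dots> = X + Y"
  proof -
    have S: "(\<Sum>k=1..int K. d2x h mV k * mN k + d2x h mV k * mS k)
        = (\<Sum>k=1..int K. mN k * d2x h mV k) + (\<Sum>k=1..int K. d2x h mV k * mS k)"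
      by (simp add: sum.distrib mult.commute)
    show ?thesis unfolding W1 W2 Zd S by (simp add: algebra_simps add_divide_distrib diff_divide_distrib)
  qed
  finally have "ener h K b N1 V1 = ener h K a N0 V0" using XY by simp
  with mass show ?thesis by simp
qed


lemma tele_int2:
  fixes f :: "int \<Rightarrow> real"
  shows "f (i + int n) - f i = (\<Sum>l\<in>{i..<i + int n}. f (l+1) - f l)"
proof (induction n)
  case 0 then show ?case by simp
next
  case (Suc n)
  have "{i..<i + int (Suc n)} = insert (i + int n) {i..<i + int n}" by auto
  then show ?case using Suc by (simp add: ac_simps)
qed

lemma diff_le_tv:
  fixes f :: "int \<Rightarrow> real"
  assumes i: "i \<in> {1..int K}" and j: "j \<in> {1..int K}"
  shows "f j - f i \<le> (\<Sum>l=1..int K. \<bar>f (l+1) - f l\<bar>)"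
proof (cases "i \<le> j")
  case True
  define n where "n = nat (j - i)"
  have jn: "j = i + int n" using True n_def by simp
  have "f j - f i = (\<Sum>l\<in>{i..<j}. f (l+1) - f l)" using tele_int2[of f i n] jn by simp
  also have "\<dots> \<le> (\<Sum>l\<in>{i..<j}. \<bar>f (l+1) - f l\<bar>)" by (rule sum_mono) simp
  also have "\<dots> \<le> (\<Sum>l=1..int K. \<bar>f (l+1) - f l\<bar>)"
    by (rule sum_mono2) (use i j in auto)
  finally show ?thesis .
next
  case False
  define n where "n = nat (i - j)"
  have jn: "i = j + int n" using False n_def by simp
  have "f j - f i = - (\<Sum>l\<in>{j..<i}. f (l+1) - f l)" using tele_int2[of f j n] jn by simp
  also have "\<dots> \<le> (\<Sum>l\<in>{j..<i}. \<bar>f (l+1) - f l\<bar>)"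
    by (simp add: sum_negf[symmetric]) (rule sum_mono, simp)
  also have "\<dots> \<le> (\<Sum>l=1..int K. \<bar>f (l+1) - f l\<bar>)"
    by (rule sum_mono2) (use i j in auto)
  finally show ?thesis .
qed

lemma exists_small:
  fixes f :: "int \<Rightarrow> real"
  assumes "K > 0"
  shows "\<exists>i\<in>{1..int K}. real K * f i \<le> (\<Sum>k=1..int K. f k)"
proof -
  let ?S = "{1..int K}"
  have ne: "?S \<noteq> {}" using assms by simp
  have fin: "finite (f ` ?S)" by simp
  obtain i where i: "i \<in> ?S" "f i = Min (f ` ?S)"
  proof -
    have "Min (f ` ?S) \<in> f ` ?S" using Min_in[OF fin] ne by blast
    then obtain i where "i \<in> ?S" "Min (f ` ?S) = f i" by (metis imageE)
    then show ?thesis using that by simp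
  qed
  have fk: "\<forall>k\<in>?S. f i \<le> f k" using i fin by simp
  have "(\<Sum>k\<in>?S. f i) \<le> (\<Sum>k\<in>?S. f k)" by (rule sum_mono) (use fk in blast)
  moreover have "(\<Sum>k\<in>?S. f i) = real K * f i" by simp
  ultimately have "real K * f i \<le> (\<Sum>k\<in>?S. f k)" by linarith
  then show ?thesis using i(1) by blast
qed

lemma amgm: fixes d x y e :: real assumes "e > 0"
  shows "d * (x + y) \<le> e * d\<^sup>2 + (x\<^sup>2 + y\<^sup>2) / (2 * e)"
proof -
  have "0 \<le> (2 * e * d - (x + y))\<^sup>2 + (x - y)\<^sup>2" by simp
  then have "0 \<le> 4 * e\<^sup>2 * d\<^sup>2 - 4 * e * d * (x + y) + 2 * (x\<^sup>2 + y\<^sup>2)"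
    by (simp add: power2_eq_square algebra_simps)
  moreover have "e * d\<^sup>2 + (x\<^sup>2 + y\<^sup>2) / (2 * e) - d * (x + y)
      = (4 * e\<^sup>2 * d\<^sup>2 - 4 * e * d * (x + y) + 2 * (x\<^sup>2 + y\<^sup>2)) / (4 * e)"
    using assms by (simp add: field_simps power2_eq_square)
  ultimately have "0 \<le> e * d\<^sup>2 + (x\<^sup>2 + y\<^sup>2) / (2 * e) - d * (x + y)"
    using assms by simp
  then show ?thesis by simp
qed

lemma sob:
  fixes E :: "int \<Rightarrow> complex"
  assumes h: "h > 0" and K: "K > 0" and pE: "periodic_grid K E" and e: "e > 0"
    and j: "j \<in> {1..int K}"
  shows "(cmod (E j))\<^sup>2 \<le> msum K E / real K + e * h * (\<Sum>k=1..int K. (cmod (Dg h E k))\<^sup>2)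
           + h * msum K E / e"
proof -
  let ?f = "\<lambda>k. (cmod (E k))\<^sup>2"
  obtain i where i: "i \<in> {1..int K}" "real K * ?f i \<le> msum K E"
    using exists_small[OF K, of ?f] unfolding msum_def by blast
  have fi: "?f i \<le> msum K E / real K" using i K by (simp add: field_simps)
  have tv: "?f j - ?f i \<le> (\<Sum>l=1..int K. \<bar>?f (l+1) - ?f l\<bar>)"
    by (rule diff_le_tv[OF i(1) j])
  have pt: "\<bar>?f (l+1) - ?f l\<bar> \<le> e * h * (cmod (Dg h E l))\<^sup>2 + h * (?f (l+1) + ?f l) / (2 * e)" for l
  proof -
    let ?x = "cmod (E (l+1))" and ?y = "cmod (E l)"
    have "?f (l+1) - ?f l = (?x - ?y) * (?x + ?y)"
      by (simp add: power2_eq_square algebra_simps)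
    then have "\<bar>?f (l+1) - ?f l\<bar> = \<bar>?x - ?y\<bar> * (?x + ?y)"
      by (simp add: abs_mult)
    also have "\<dots> \<le> cmod (E (l+1) - E l) * (?x + ?y)"
      by (rule mult_right_mono) (simp_all add: norm_triangle_ineq3)
    also have "cmod (E (l+1) - E l) = h * cmod (Dg h E l)"
      using h by (simp add: Dg_def)
    also have "h * cmod (Dg h E l) * (?x + ?y) = h * (cmod (Dg h E l) * (?x + ?y))" by simp
    also have "\<dots> \<le> h * (e * (cmod (Dg h E l))\<^sup>2 + (?x\<^sup>2 + ?y\<^sup>2) / (2 * e))"
      using h by (intro mult_left_mono amgm e) auto
    finally show ?thesis by (simp add: algebra_simps)
  qed
  have "(\<Sum>l=1..int K. \<bar>?f (l+1) - ?f l\<bar>)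
      \<le> (\<Sum>l=1..int K. e * h * (cmod (Dg h E l))\<^sup>2 + h * (?f (l+1) + ?f l) / (2 * e))"
    by (rule sum_mono) (rule pt)
  also have "\<dots> = e * h * (\<Sum>l=1..int K. (cmod (Dg h E l))\<^sup>2)
      + h / (2 * e) * ((\<Sum>l=1..int K. ?f (l+1)) + (\<Sum>l=1..int K. ?f l))"
  proof -
    have "h * (?f (l+1) + ?f l) / (2 * e) = h / (2 * e) * ?f (l+1) + h / (2 * e) * ?f l" for l
      by (simp add: distrib_left add_divide_distrib)
    then show ?thesis by (simp only: sum.distrib sum_distrib_left[symmetric] distrib_left)
  qed
  also have "(\<Sum>l=1..int K. ?f (l+1)) = (\<Sum>l=1..int K. ?f l)"
  proof -
    have "E (1 + int K) = E 1" using pE unfolding periodic_grid_def by blast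
    then have "?f (0 + 1) = ?f (int K + 1)" by (simp add: add.commute)
    from shift_sum[of "\<lambda>l. ?f (l+1)", OF this] show ?thesis by simp
  qed
  finally have fin2: "(\<Sum>l=1..int K. \<bar>?f (l+1) - ?f l\<bar>)
      \<le> e * h * (\<Sum>l=1..int K. (cmod (Dg h E l))\<^sup>2) + h / (2 * e) * (msum K E + msum K E)"
    unfolding msum_def .
  have "h / (2 * e) * (msum K E + msum K E) = h * msum K E / e" using e by simp
  then show ?thesis using tv fi fin2 by linarith
qed


lemma Ebound:
  fixes E :: "int \<Rightarrow> complex"
  assumes h: "h > 0" and K: "K > 0" and pE: "periodic_grid K E" and j: "j \<in> {1..int K}"
  shows "(cmod (E j))\<^sup>2 \<le> h * msum K E / (h * real K) + h * ener h K E N V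
     + (h * msum K E)\<^sup>2 / (h * real K) + (h * msum K E)\<^sup>2 * (2 * (h * msum K E) + 2)
     + (h * msum K E) * (2 * (h * msum K E) + 2)"
proof -
  define Q where "Q = h * msum K E"
  define L where "L = h * real K"
  define Ps where "Ps = (\<Sum>k=1..int K. (cmod (Dg h E k))\<^sup>2)"
  define P where "P = h * Ps"
  define e where "e = 1 / (2 * Q + 2)"
  have L: "L > 0" unfolding L_def using h K by simp
  have Q0: "Q \<ge> 0" unfolding Q_def msum_def using h by (simp add: sum_nonneg)
  have P0: "P \<ge> 0" unfolding P_def Ps_def using h by (simp add: sum_nonneg)
  have e0: "e > 0" unfolding e_def using Q0 by simp
  have eh: "e \<le> 1/2" unfolding e_def using Q0 by (simp add: field_simps)
  have eQ: "e * Q \<le> 1/2" unfolding e_def using Q0 by (simp add: field_simps)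
  have ie: "Q / e = Q * (2 * Q + 2)" unfolding e_def by simp
  define Mx where "Mx = Q / L + e * P + Q / e"
  have mK: "msum K E / real K = Q / L" unfolding Q_def L_def using h by simp
  have bk: "(cmod (E k))\<^sup>2 \<le> Mx" if "k \<in> {1..int K}" for k
    using sob[OF h K pE e0 that] unfolding Mx_def mK P_def Ps_def Q_def by (simp add: algebra_simps)
  have f4: "(\<Sum>k=1..int K. ((cmod (E k))\<^sup>2)\<^sup>2) \<le> Mx * msum K E"
  proof -
    have "(\<Sum>k=1..int K. ((cmod (E k))\<^sup>2)\<^sup>2) \<le> (\<Sum>k=1..int K. Mx * (cmod (E k))\<^sup>2)"
    proof (rule sum_mono)
      fix k assume "k \<in> {1..int K}"
      then have "(cmod (E k))\<^sup>2 \<le> Mx" by (rule bk)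
      then show "((cmod (E k))\<^sup>2)\<^sup>2 \<le> Mx * (cmod (E k))\<^sup>2"
        unfolding power2_eq_square[of "(cmod (E k))\<^sup>2"] by (intro mult_right_mono) auto
    qed
    then show ?thesis unfolding msum_def by (simp add: sum_distrib_left)
  qed
  have lowpt: "N k * (cmod (E k))\<^sup>2 + (N k)\<^sup>2 / 2 \<ge> - ((cmod (E k))\<^sup>2)\<^sup>2" for k
  proof -
    have "0 \<le> (N k / 2 + (cmod (E k))\<^sup>2)\<^sup>2" by simp
    then have "0 \<le> (N k)\<^sup>2 / 4 + N k * (cmod (E k))\<^sup>2 + ((cmod (E k))\<^sup>2)\<^sup>2"
      by (simp add: power2_eq_square algebra_simps)
    moreover have "(N k)\<^sup>2 / 4 \<le> (N k)\<^sup>2 / 2" by simp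
    ultimately show ?thesis by linarith
  qed
  have "ener h K E N V \<ge> Ps - (\<Sum>k=1..int K. ((cmod (E k))\<^sup>2)\<^sup>2)"
  proof -
    have "(\<Sum>k=1..int K. N k * (cmod (E k))\<^sup>2) + (\<Sum>k=1..int K. (N k)\<^sup>2) / 2
        = (\<Sum>k=1..int K. N k * (cmod (E k))\<^sup>2 + (N k)\<^sup>2 / 2)"
      by (simp add: sum.distrib sum_divide_distrib)
    also have "\<dots> \<ge> (\<Sum>k=1..int K. - ((cmod (E k))\<^sup>2)\<^sup>2)"
      by (rule sum_mono) (rule lowpt)
    finally have a: "(\<Sum>k=1..int K. N k * (cmod (E k))\<^sup>2) + (\<Sum>k=1..int K. (N k)\<^sup>2) / 2
        \<ge> - (\<Sum>k=1..int K. ((cmod (E k))\<^sup>2)\<^sup>2)" by (simp add: sum_negf)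
    have b: "(\<Sum>k=1..int K. (Dg h V k)\<^sup>2) / 2 \<ge> 0" by (simp add: sum_nonneg)
    show ?thesis using a b unfolding ener_def Ps_def by linarith
  qed
  then have "h * ener h K E N V \<ge> P - h * (Mx * msum K E)"
    using f4 h unfolding P_def
    by (smt (verit) mult_left_mono right_diff_distrib)
  then have Hl: "h * ener h K E N V \<ge> P - Mx * Q" unfolding Q_def by (simp add: algebra_simps)
  have "Mx * Q = Q * Q / L + (e * Q) * P + Q * (2 * Q + 2) * Q"
    unfolding Mx_def ie by (simp add: algebra_simps)
  moreover have "(e * Q) * P \<le> P / 2" using eQ P0 by (simp add: mult_right_mono[of _ "1/2" P, simplified])
  ultimately have P2: "P / 2 \<le> h * ener h K E N V + Q * Q / L + Q * (2 * Q + 2) * Q"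
    using Hl by linarith
  then have P2: "P / 2 \<le> h * ener h K E N V + Q\<^sup>2 / L + Q\<^sup>2 * (2 * Q + 2)"
    by (simp add: power2_eq_square mult.commute mult.left_commute)
  have "e * P \<le> P / 2" using eh P0 by (simp add: mult_right_mono[of _ "1/2" P, simplified])
  have "(cmod (E j))\<^sup>2 \<le> Mx" by (rule bk[OF j])
  then have "(cmod (E j))\<^sup>2 \<le> Q / L + h * ener h K E N V + Q\<^sup>2 / L + Q\<^sup>2 * (2 * Q + 2) + Q * (2 * Q + 2)"
    using P2 \<open>e * P \<le> P / 2\<close> unfolding Mx_def ie by linarith
  then show ?thesis unfolding Q_def L_def .
qed


lemma bnd2:
  fixes F :: "real \<Rightarrow> real \<Rightarrow> 'b::real_normed_vector"
  assumes "smooth2 F"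
  shows "\<exists>B\<ge>0. \<forall>t\<in>{a..b}. \<forall>x\<in>{c..d}. norm (F t x) \<le> B"
proof -
  have "Ck 0 (\<lambda>(t, x). F t x)" using assms unfolding smooth2_def by blast
  then have c: "continuous_on UNIV (\<lambda>(t, x). F t x)" by simp
  have "compact ((\<lambda>(t, x). F t x) ` ({a..b} \<times> {c..d}))"
    by (rule compact_continuous_image[OF continuous_on_subset[OF c]]) (auto intro: compact_Times)
  then have "bounded ((\<lambda>(t, x). F t x) ` ({a..b} \<times> {c..d}))" by (rule compact_imp_bounded)
  then obtain B where B: "\<forall>v\<in>(\<lambda>(t, x). F t x) ` ({a..b} \<times> {c..d}). norm v \<le> B"
    unfolding bounded_iff by blast
  have "\<forall>t\<in>{a..b}. \<forall>x\<in>{c..d}. norm (F t x) \<le> B"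
  proof (intro ballI)
    fix t x assume "t \<in> {a..b}" "x \<in> {c..d}"
    then have "F t x \<in> (\<lambda>(t, x). F t x) ` ({a..b} \<times> {c..d})"
      by (metis (no_types, lifting) SigmaI case_prod_conv image_eqI)
    then show "norm (F t x) \<le> B" using B by blast
  qed
  then have "\<forall>t\<in>{a..b}. \<forall>x\<in>{c..d}. norm (F t x) \<le> max B 0" by force
  then show ?thesis by (intro exI[of _ "max B 0"]) simp
qed

lemma gip_bound:
  assumes "h \<ge> 0"
  shows "cmod (gip h K v w) \<le> h * (\<Sum>k=1..int K. cmod (v k) * cmod (w k))"
proof -
  have "cmod (gip h K v w) = cmod (\<Sum>k=1..int K. v k * cnj (w k)) * h"
    unfolding gip_def using assms by (simp add: norm_mult)
  also have "\<dots> \<le> (\<Sum>k=1..int K. cmod (v k * cnj (w k))) * h"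
    using assms by (intro mult_right_mono norm_sum) auto
  finally show ?thesis by (simp add: norm_mult mult.commute)
qed

lemma gnorm_sq:
  assumes "h \<ge> 0"
  shows "(gnorm h K v)\<^sup>2 = h * (\<Sum>k=1..int K. (cmod (v k))\<^sup>2)"
proof -
  have "v k * cnj (v k) = complex_of_real ((cmod (v k))\<^sup>2)" for k
    by (rule complex_norm_square[symmetric])
  then have "Re (gip h K v v) = h * (\<Sum>k=1..int K. (cmod (v k))\<^sup>2)"
    unfolding gip_def by (simp add: mult.commute)
  moreover have "h * (\<Sum>k=1..int K. (cmod (v k))\<^sup>2) \<ge> 0" using assms by (simp add: sum_nonneg)
  ultimately show ?thesis unfolding gnorm_def by simp
qed

lemma ptwise:
  fixes a n tn t c0 ME MN :: real
  assumes "0 \<le> a" "a \<le> c0" "\<bar>tn\<bar> \<le> MN" "0 \<le> t" "t \<le> ME"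
  shows "\<bar>n + tn\<bar> * a\<^sup>2 + 2 * (a * (t * \<bar>n\<bar>)) \<le> 3/2 * n\<^sup>2 + ((c0 + 2 * ME)\<^sup>2 / 4 + MN + 1) * a\<^sup>2"
proof -
  have s1: "\<bar>n + tn\<bar> * a\<^sup>2 \<le> \<bar>n\<bar> * a\<^sup>2 + MN * a\<^sup>2"
  proof -
    have "\<bar>n + tn\<bar> \<le> \<bar>n\<bar> + MN" using assms(3) by linarith
    then have "\<bar>n + tn\<bar> * a\<^sup>2 \<le> (\<bar>n\<bar> + MN) * a\<^sup>2" by (rule mult_right_mono) simp
    then show ?thesis by (simp add: algebra_simps)
  qed
  have s2: "\<bar>n\<bar> * a\<^sup>2 \<le> \<bar>n\<bar> * a * c0"
    using assms(1,2) by (simp add: power2_eq_square mult_left_mono mult.assoc)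
  have s3: "2 * (a * (t * \<bar>n\<bar>)) \<le> \<bar>n\<bar> * a * (2 * ME)"
  proof -
    have "a * \<bar>n\<bar> * t \<le> a * \<bar>n\<bar> * ME" using assms by (intro mult_left_mono) auto
    then show ?thesis by (simp add: algebra_simps)
  qed
  have s4: "\<bar>n\<bar> * (a * (c0 + 2 * ME)) \<le> n\<^sup>2 + (c0 + 2 * ME)\<^sup>2 / 4 * a\<^sup>2"
  proof -
    have "0 \<le> (\<bar>n\<bar> - a * (c0 + 2 * ME) / 2)\<^sup>2" by simp
    then show ?thesis by (simp add: power2_eq_square algebra_simps)
  qed
  have "\<bar>n\<bar> * a * c0 + \<bar>n\<bar> * a * (2 * ME) = \<bar>n\<bar> * (a * (c0 + 2 * ME))"
    by (simp add: algebra_simps)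
  moreover have "((c0 + 2 * ME)\<^sup>2 / 4 + MN + 1) * a\<^sup>2 = (c0 + 2 * ME)\<^sup>2 / 4 * a\<^sup>2 + MN * a\<^sup>2 + a\<^sup>2"
    by (simp add: algebra_simps)
  moreover have "0 \<le> n\<^sup>2" "0 \<le> a\<^sup>2" by simp_all
  ultimately show ?thesis using s1 s2 s3 s4 by linarith
qed

lemma sum_le_const:
  fixes f :: "int \<Rightarrow> real"
  assumes "\<And>k. k \<in> {1..int K} \<Longrightarrow> f k \<le> c" "h \<ge> 0"
  shows "h * (\<Sum>k=1..int K. f k) \<le> h * real K * c"
proof -
  have "(\<Sum>k=1..int K. f k) \<le> (\<Sum>k=1..int K. c)" by (rule sum_mono) (rule assms(1))
  then have "(\<Sum>k=1..int K. f k) \<le> real K * c" by simp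
  then show ?thesis using assms(2) by (simp add: mult_left_mono mult.assoc)
qed

theorem lemma3p8:
  fixes L T CV :: real
    and E :: "real \<Rightarrow> real \<Rightarrow> complex" and N V :: "real \<Rightarrow> real \<Rightarrow> real"
  assumes "L > 0" and "T > 0" and "CV \<ge> 0"
    and "smooth2 E" and "smooth2 N" and "smooth2 V"
    and "\<And>t x. E t (x + L) = E t x" and "\<And>t x. N t (x + L) = N t x" and "\<And>t x. V t (x + L) = V t x"
    and "\<And>t x. t \<in> {0..T} \<Longrightarrow> \<i> * pdt E t x + pdx (pdx E) t x = complex_of_real (N t x) * E t x"
    and "\<And>t x. t \<in> {0..T} \<Longrightarrow> pdt N t x = pdx (pdx V) t x"
    and "\<And>t x. t \<in> {0..T} \<Longrightarrow> pdt V t x = N t x + (cmod (E t x))\<^sup>2"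
    and "V 0 0 = 0"
    and "integral {0..L} (\<lambda>x. pdt N 0 x) = 0"
  shows "\<exists>C4 > 0. \<exists>h0 > 0. \<forall>(K::nat) (M::nat) (En :: nat \<Rightarrow> int \<Rightarrow> complex) (Nn :: nat \<Rightarrow> int \<Rightarrow> real)
             (Vn :: nat \<Rightarrow> int \<Rightarrow> real).
     K > 0 \<longrightarrow> M > 0 \<longrightarrow> L / real K < h0 \<longrightarrow>
     (\<forall>m \<le> M. periodic_grid K (En m) \<and> periodic_grid K (Nn m) \<and> periodic_grid K (Vn m)) \<longrightarrow>
     (\<forall>m < M. dvdm_step (L / real K) (T / real M) (En m) (Nn m) (Vn m)
                  (En (Suc m)) (Nn (Suc m)) (Vn (Suc m))) \<longrightarrow>
     (\<forall>k. En 0 k = E 0 (real_of_int k * (L / real K))) \<longrightarrow>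
     (\<forall>k. Nn 0 k = N 0 (real_of_int k * (L / real K))) \<longrightarrow>
     (\<forall>k. \<bar>Vn 0 k - V 0 (real_of_int k * (L / real K))\<bar> \<le> CV * (L / real K)\<^sup>2) \<longrightarrow>
     (\<forall>m \<le> M.
        let h = L / real K; dt = T / real M;
            tE = (\<lambda>k. E (real m * dt) (real_of_int k * h));
            tN = (\<lambda>k. N (real m * dt) (real_of_int k * h));
            eE = (\<lambda>k. En m k - tE k);
            eN = (\<lambda>k. Nn m k - tN k)
        in cmod (Aq h K eE eN tE tN)
             \<le> 3 / 2 * (gnorm h K (\<lambda>k. complex_of_real (eN k)))\<^sup>2 + C4 * (gnorm h K eE)\<^sup>2)"
proof -
  note aL = assms(1) and aT = assms(2) and aCV = assms(3)
  obtain ME where ME0: "ME \<ge> 0" and ME: "\<forall>t\<in>{0..T}. \<forall>x\<in>{0..L}. cmod (E t x) \<le> ME"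
    using bnd2[OF assms(4), of 0 T 0 L] by blast
  obtain MN where MN0: "MN \<ge> 0" and MN: "\<forall>t\<in>{0..T}. \<forall>x\<in>{0..L}. \<bar>N t x\<bar> \<le> MN"
    using bnd2[OF assms(5), of 0 T 0 L] by auto
  obtain BE where BE0: "BE \<ge> 0"
    and BE: "\<forall>x\<in>{0..2*L}. \<forall>y\<in>{0..2*L}. x \<le> y \<longrightarrow> cmod (E 0 y - E 0 x) \<le> BE * (y - x)"
    using lip_x[OF assms(4), of 0 "2*L" 0] by blast
  obtain BV where BV0: "BV \<ge> 0"
    and BV: "\<forall>x\<in>{0..2*L}. \<forall>y\<in>{0..2*L}. x \<le> y \<longrightarrow> \<bar>V 0 y - V 0 x\<bar> \<le> BV * (y - x)"
    using lip_x[OF assms(6), of 0 "2*L" 0] by auto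
  define Qb where "Qb = L * ME\<^sup>2"
  define Hb where "Hb = L * BE\<^sup>2 + L * (MN * ME\<^sup>2) + L * MN\<^sup>2 / 2 + L * (BV + 2 * CV * L)\<^sup>2 / 2"
  define G where "G = Qb / L + Hb + Qb\<^sup>2 / L + Qb\<^sup>2 * (2 * Qb + 2) + Qb * (2 * Qb + 2)"
  define c0 where "c0 = sqrt G + ME"
  define C4 where "C4 = (c0 + 2 * ME)\<^sup>2 / 4 + MN + 1"
  have C4pos: "C4 > 0" unfolding C4_def using MN0 by (simp add: add_nonneg_pos)
  show ?thesis
  proof (rule exI[of _ C4], intro conjI C4pos exI[of _ "1::real"] zero_less_one allI impI)
    fix K M :: nat and En :: "nat \<Rightarrow> int \<Rightarrow> complex" and Nn Vn :: "nat \<Rightarrow> int \<Rightarrow> real" and m :: nat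
    assume K0: "K > 0" and M0: "M > 0" and "L / real K < 1"
      and per: "\<forall>m\<le>M. periodic_grid K (En m) \<and> periodic_grid K (Nn m) \<and> periodic_grid K (Vn m)"
      and st: "\<forall>m<M. dvdm_step (L / real K) (T / real M) (En m) (Nn m) (Vn m)
                  (En (Suc m)) (Nn (Suc m)) (Vn (Suc m))"
      and i1: "\<forall>k. En 0 k = E 0 (real_of_int k * (L / real K))"
      and i2: "\<forall>k. Nn 0 k = N 0 (real_of_int k * (L / real K))"
      and i3: "\<forall>k. \<bar>Vn 0 k - V 0 (real_of_int k * (L / real K))\<bar> \<le> CV * (L / real K)\<^sup>2"
      and mM: "m \<le> M"
    define h where "h = L / real K"
    define dt where "dt = T / real M"
    have h0: "h > 0" unfolding h_def using aL K0 by simp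
    have dt0: "dt > 0" unfolding dt_def using aT M0 by simp
    have hK: "h * real K = L" unfolding h_def using K0 by simp
    have hL: "h \<le> L" unfolding h_def using aL K0 by (simp add: field_simps)
    have i1': "\<And>k. En 0 k = E 0 (real_of_int k * h)" using i1 unfolding h_def by blast
    have i2': "\<And>k. Nn 0 k = N 0 (real_of_int k * h)" using i2 unfolding h_def by blast
    have i3': "\<And>k. \<bar>Vn 0 k - V 0 (real_of_int k * h)\<bar> \<le> CV * h\<^sup>2" using i3 unfolding h_def by blast
    have st': "\<And>m. m < M \<Longrightarrow> dvdm_step h dt (En m) (Nn m) (Vn m) (En (Suc m)) (Nn (Suc m)) (Vn (Suc m))"
      using st unfolding h_def dt_def by blast
    have pE: "\<And>m. m \<le> M \<Longrightarrow> periodic_grid K (En m)" using per by blast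
    have pN: "\<And>m. m \<le> M \<Longrightarrow> periodic_grid K (Nn m)" using per by blast
    have pV: "\<And>m. m \<le> M \<Longrightarrow> periodic_grid K (Vn m)" using per by blast
    have xin: "real_of_int k * h \<in> {0..L}" if "k \<in> {1..int K}" for k
    proof -
      have "real_of_int k \<le> real K" using that by (metis atLeastAtMost_iff of_int_le_iff of_int_of_nat_eq)
      then have "real_of_int k * h \<le> real K * h" using h0 by (intro mult_right_mono) auto
      moreover have "0 \<le> real_of_int k * h" using that h0 by simp
      ultimately show ?thesis using hK by (simp add: mult.commute)
    qed
    have xin2: "real_of_int (k + 1) * h \<in> {0..2*L}" if "k \<in> {1..int K}" for k
      using xin[OF that] hL h0 by (simp add: distrib_right)
    have xin1: "real_of_int k * h \<in> {0..2*L}" if "k \<in> {1..int K}" for k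
      using xin[OF that] aL by simp
    have t00: "(0::real) \<in> {0..T}" using aT by simp
    have tin: "real m * dt \<in> {0..T}"
    proof -
      have "real m * dt \<le> real M * dt" using mM dt0 by (intro mult_right_mono) auto
      also have "real M * dt = T" unfolding dt_def using M0 by simp
      finally show ?thesis using dt0 by simp
    qed
    have cons: "msum K (En m') = msum K (En 0) \<and> ener h K (En m') (Nn m') (Vn m') = ener h K (En 0) (Nn 0) (Vn 0)"
      if "m' \<le> M" for m'
      using that
    proof (induction m')
      case 0 then show ?case by simp
    next
      case (Suc m')
      then have lt: "m' < M" by simp
      have "msum K (En (Suc m')) = msum K (En m') \<and> ener h K (En (Suc m')) (Nn (Suc m')) (Vn (Suc m')) = ener h K (En m') (Nn m') (Vn m')"
        using lt by (intro step_cons[OF st'[OF lt] h0 dt0] pE pN pV) auto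
      then show ?case using Suc.IH lt by simp
    qed
    have Qnn: "0 \<le> h * msum K (En 0)" unfolding msum_def using h0 by (simp add: sum_nonneg)
    have Q0: "h * msum K (En 0) \<le> Qb"
    proof -
      have "(cmod (En 0 k))\<^sup>2 \<le> ME\<^sup>2" if "k \<in> {1..int K}" for k
        using ME t00 xin[OF that] i1'[of k] by (intro power_mono) auto
      then have "h * msum K (En 0) \<le> h * real K * ME\<^sup>2"
        unfolding msum_def using h0 by (intro sum_le_const) auto
      then show ?thesis unfolding Qb_def using hK by simp
    qed
    have H0: "h * ener h K (En 0) (Nn 0) (Vn 0) \<le> Hb"
    proof -
      have b1: "(cmod (Dg h (En 0) k))\<^sup>2 \<le> BE\<^sup>2" if k: "k \<in> {1..int K}" for k
      proof -
        have "cmod (Dg h (En 0) k) = (1/h) * cmod (E 0 (real_of_int (k+1) * h) - E 0 (real_of_int k * h))"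
          unfolding Dg_def using h0 i1'[of k] i1'[of "k+1"] by simp
        also have "\<dots> \<le> (1/h) * (BE * (real_of_int (k+1) * h - real_of_int k * h))"
        proof -
          have "cmod (E 0 (real_of_int (k+1) * h) - E 0 (real_of_int k * h))
              \<le> BE * (real_of_int (k+1) * h - real_of_int k * h)"
            by (rule BE[rule_format, OF xin1[OF k] xin2[OF k]]) (use h0 in \<open>simp add: distrib_right\<close>)
          then show ?thesis using h0 by (intro mult_left_mono) auto
        qed
        also have "\<dots> = BE" using h0 by (simp add: distrib_right)
        finally show ?thesis by (intro power_mono) auto
      qed
      have b2: "Nn 0 k * (cmod (En 0 k))\<^sup>2 \<le> MN * ME\<^sup>2" if k: "k \<in> {1..int K}" for k
      proof -
        have "\<bar>Nn 0 k\<bar> \<le> MN" using MN t00 xin[OF k] i2'[of k] by auto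
        moreover have "(cmod (En 0 k))\<^sup>2 \<le> ME\<^sup>2"
          using ME t00 xin[OF k] i1'[of k] by (intro power_mono) auto
        ultimately have "\<bar>Nn 0 k\<bar> * (cmod (En 0 k))\<^sup>2 \<le> MN * ME\<^sup>2"
          using MN0 by (intro mult_mono) auto
        moreover have "Nn 0 k * (cmod (En 0 k))\<^sup>2 \<le> \<bar>Nn 0 k\<bar> * (cmod (En 0 k))\<^sup>2"
          by (intro mult_right_mono) auto
        ultimately show ?thesis by linarith
      qed
      have b3: "(Nn 0 k)\<^sup>2 \<le> MN\<^sup>2" if k: "k \<in> {1..int K}" for k
      proof -
        have "\<bar>Nn 0 k\<bar> \<le> MN" using MN t00 xin[OF k] i2'[of k] by auto
        then have "\<bar>Nn 0 k\<bar>\<^sup>2 \<le> MN\<^sup>2" by (intro power_mono) auto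
        then show ?thesis by simp
      qed
      have b4: "(Dg h (Vn 0) k)\<^sup>2 \<le> (BV + 2 * CV * L)\<^sup>2" if k: "k \<in> {1..int K}" for k
      proof -
        have a1: "\<bar>V 0 (real_of_int (k+1) * h) - V 0 (real_of_int k * h)\<bar> \<le> BV * h"
          using BV[rule_format, OF xin1[OF k] xin2[OF k]] h0 by (simp add: distrib_right)
        have a2: "\<bar>Vn 0 (k+1) - V 0 (real_of_int (k+1) * h)\<bar> \<le> CV * h\<^sup>2" by (rule i3')
        have a3: "\<bar>Vn 0 k - V 0 (real_of_int k * h)\<bar> \<le> CV * h\<^sup>2" by (rule i3')
        have a4: "CV * h\<^sup>2 \<le> CV * L * h" using aCV hL h0
          by (simp add: power2_eq_square mult.assoc mult_left_mono mult_right_mono)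
        have "\<bar>Vn 0 (k+1) - Vn 0 k\<bar> \<le> h * (BV + 2 * CV * L)"
          using a1 a2 a3 a4 by (simp add: algebra_simps)
        then have "\<bar>Dg h (Vn 0) k\<bar> \<le> BV + 2 * CV * L"
          unfolding Dg_def using h0 by (simp add: abs_mult field_simps)
        then have "\<bar>Dg h (Vn 0) k\<bar>\<^sup>2 \<le> (BV + 2 * CV * L)\<^sup>2" by (intro power_mono) auto
        then show ?thesis by simp
      qed
      have s1: "h * (\<Sum>k=1..int K. (cmod (Dg h (En 0) k))\<^sup>2) \<le> L * BE\<^sup>2"
        using sum_le_const[of K _ "BE\<^sup>2" h, OF b1] h0 hK by simp
      have s2: "h * (\<Sum>k=1..int K. Nn 0 k * (cmod (En 0 k))\<^sup>2) \<le> L * (MN * ME\<^sup>2)"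
        using sum_le_const[of K _ "MN * ME\<^sup>2" h, OF b2] h0 hK by simp
      have s3: "h * (\<Sum>k=1..int K. (Nn 0 k)\<^sup>2) \<le> L * MN\<^sup>2"
        using sum_le_const[of K _ "MN\<^sup>2" h, OF b3] h0 hK by simp
      have s4: "h * (\<Sum>k=1..int K. (Dg h (Vn 0) k)\<^sup>2) \<le> L * (BV + 2 * CV * L)\<^sup>2"
        using sum_le_const[of K _ "(BV + 2 * CV * L)\<^sup>2" h, OF b4] h0 hK by simp
      have "h * ener h K (En 0) (Nn 0) (Vn 0) = h * (\<Sum>k=1..int K. (cmod (Dg h (En 0) k))\<^sup>2)
          + h * (\<Sum>k=1..int K. Nn 0 k * (cmod (En 0 k))\<^sup>2) + h * (\<Sum>k=1..int K. (Nn 0 k)\<^sup>2) / 2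
          + h * (\<Sum>k=1..int K. (Dg h (Vn 0) k)\<^sup>2) / 2"
        unfolding ener_def by (simp add: distrib_left)
      then show ?thesis unfolding Hb_def using s1 s2 s3 s4 by linarith
    qed
    have Ebd: "cmod (En m k) \<le> sqrt G" if k: "k \<in> {1..int K}" for k
    proof -
      let ?Q = "h * msum K (En 0)" and ?H = "h * ener h K (En 0) (Nn 0) (Vn 0)"
      have "(cmod (En m k))\<^sup>2 \<le> ?Q / L + ?H + ?Q\<^sup>2 / L + ?Q\<^sup>2 * (2 * ?Q + 2) + ?Q * (2 * ?Q + 2)"
        using Ebound[OF h0 K0 pE[OF mM] k, of "Nn m" "Vn m"] cons[OF mM] hK by simp
      moreover have "?Q / L \<le> Qb / L" using Q0 aL by (simp add: divide_right_mono)
      moreover have q2: "?Q\<^sup>2 \<le> Qb\<^sup>2" using Q0 Qnn by (intro power_mono) auto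
      moreover have "?Q\<^sup>2 / L \<le> Qb\<^sup>2 / L" using q2 aL by (simp add: divide_right_mono)
      moreover have "?Q\<^sup>2 * (2 * ?Q + 2) \<le> Qb\<^sup>2 * (2 * Qb + 2)"
        using q2 Q0 Qnn by (intro mult_mono) auto
      moreover have "?Q * (2 * ?Q + 2) \<le> Qb * (2 * Qb + 2)"
        using Q0 Qnn by (intro mult_mono) auto
      ultimately have "(cmod (En m k))\<^sup>2 \<le> G" unfolding G_def using H0 by linarith
      then show ?thesis by (rule real_le_rsqrt)
    qed
    have fin: "cmod (Aq h K (\<lambda>k. En m k - E (real m * dt) (real_of_int k * h))
                (\<lambda>k. Nn m k - N (real m * dt) (real_of_int k * h))
                (\<lambda>k. E (real m * dt) (real_of_int k * h)) (\<lambda>k. N (real m * dt) (real_of_int k * h)))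
        \<le> 3 / 2 * (gnorm h K (\<lambda>k. complex_of_real (Nn m k - N (real m * dt) (real_of_int k * h))))\<^sup>2
          + C4 * (gnorm h K (\<lambda>k. En m k - E (real m * dt) (real_of_int k * h)))\<^sup>2"
    proof -
      define tE where "tE = (\<lambda>k. E (real m * dt) (real_of_int k * h))"
      define tN where "tN = (\<lambda>k. N (real m * dt) (real_of_int k * h))"
      define eE where "eE = (\<lambda>k. En m k - tE k)"
      define eN where "eN = (\<lambda>k. Nn m k - tN k)"
      have tEb: "cmod (tE k) \<le> ME" if k: "k \<in> {1..int K}" for k
        unfolding tE_def using ME tin xin[OF k] by blast
      have tNb: "\<bar>tN k\<bar> \<le> MN" if k: "k \<in> {1..int K}" for k
        unfolding tN_def using MN tin xin[OF k] by blast
      have eEb: "cmod (eE k) \<le> c0" if k: "k \<in> {1..int K}" for k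
      proof -
        have "cmod (eE k) \<le> cmod (En m k) + cmod (tE k)" unfolding eE_def by (rule norm_triangle_ineq4)
        then show ?thesis unfolding c0_def using Ebd[OF k] tEb[OF k] by linarith
      qed
      have g1: "cmod (gip h K (\<lambda>k. complex_of_real (eN k + tN k)) (\<lambda>k. complex_of_real ((cmod (eE k))\<^sup>2)))
          \<le> h * (\<Sum>k=1..int K. \<bar>eN k + tN k\<bar> * (cmod (eE k))\<^sup>2)"
        using gip_bound[OF less_imp_le[OF h0], of K "\<lambda>k. complex_of_real (eN k + tN k)" "\<lambda>k. complex_of_real ((cmod (eE k))\<^sup>2)"]
        by (simp only: norm_of_real abs_power2)
      have g2: "cmod (gip h K eE (\<lambda>k. tE k * complex_of_real (eN k)))
          \<le> h * (\<Sum>k=1..int K. cmod (eE k) * (cmod (tE k) * \<bar>eN k\<bar>))"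
        using gip_bound[of h K eE "\<lambda>k. tE k * complex_of_real (eN k)"] h0 by (simp add: norm_mult)
      have "cmod (Aq h K eE eN tE tN)
          \<le> cmod (gip h K (\<lambda>k. complex_of_real (eN k + tN k)) (\<lambda>k. complex_of_real ((cmod (eE k))\<^sup>2)))
            + 2 * cmod (gip h K eE (\<lambda>k. tE k * complex_of_real (eN k)))"
      proof -
        have "cmod (complex_of_real (2 * Re (gip h K eE (\<lambda>k. tE k * complex_of_real (eN k)))))
            \<le> 2 * cmod (gip h K eE (\<lambda>k. tE k * complex_of_real (eN k)))"
          using abs_Re_le_cmod by (simp add: abs_mult)
        then show ?thesis unfolding Aq_def using norm_triangle_ineq by (smt (verit))
      qed
      also have "\<dots> \<le> h * (\<Sum>k=1..int K. \<bar>eN k + tN k\<bar> * (cmod (eE k))\<^sup>2 + 2 * (cmod (eE k) * (cmod (tE k) * \<bar>eN k\<bar>)))"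
      proof -
        have "h * (\<Sum>k=1..int K. \<bar>eN k + tN k\<bar> * (cmod (eE k))\<^sup>2 + 2 * (cmod (eE k) * (cmod (tE k) * \<bar>eN k\<bar>)))
          = h * (\<Sum>k=1..int K. \<bar>eN k + tN k\<bar> * (cmod (eE k))\<^sup>2) + 2 * (h * (\<Sum>k=1..int K. cmod (eE k) * (cmod (tE k) * \<bar>eN k\<bar>)))"
          by (simp add: sum.distrib sum_distrib_left distrib_left mult.left_commute)
        then show ?thesis using g1 g2 by linarith
      qed
      also have "\<dots> \<le> h * (\<Sum>k=1..int K. 3/2 * (eN k)\<^sup>2 + C4 * (cmod (eE k))\<^sup>2)"
        unfolding C4_def using h0
        by (intro mult_left_mono sum_mono ptwise) (auto intro: eEb tNb tEb)
      also have "\<dots> = 3 / 2 * (gnorm h K (\<lambda>k. complex_of_real (eN k)))\<^sup>2 + C4 * (gnorm h K eE)\<^sup>2"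
        using h0 by (simp add: gnorm_sq sum.distrib sum_distrib_left distrib_left mult.left_commute)
      finally show ?thesis unfolding eE_def eN_def tE_def tN_def .
    qed
    then show "let h = L / real K; dt = T / real M;
            tE = (\<lambda>k. E (real m * dt) (real_of_int k * h));
            tN = (\<lambda>k. N (real m * dt) (real_of_int k * h));
            eE = (\<lambda>k. En m k - tE k);
            eN = (\<lambda>k. Nn m k - tN k)
        in cmod (Aq h K eE eN tE tN)
             \<le> 3 / 2 * (gnorm h K (\<lambda>k. complex_of_real (eN k)))\<^sup>2 + C4 * (gnorm h K eE)\<^sup>2"
      unfolding Let_def h_def dt_def .
  qed
qed

end
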